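(* Let $(D,\subseteq)$ be a complete lattice and let $T:D\to D$ be a contracting operator. Then $T$ is order independent in the sense of Definition I if and only if it is order independent in the sense of Definition II.
   Context: Let $(D,\subseteq)$ be a complete lattice with largest element $\top$. For an operator $T:D\to D$: $T$ is contracting if $T(G)\subseteq G$ for all $G$; a fixpoint of $T$ is $G$ with $T(G)=G$. Iterations: $T^0:=\top$, $T^{\alpha+1}:=T(T^\alpha)$, $T^\beta:=\bigcap_{\alpha<\beta}T^\alpha$ for limit $\beta$. The closure ordinal $\alpha_T$ is the least $\alpha$ with $T^{\alpha+1}=T^\alpha$ (if it exists) and $T^{\alpha_T}$ is then the outcome of $T$ (for contracting $T$ the outcome always exists). Definition I (for contracting $T$): $T$ is order independent if $R^{\alpha_R}=T^{\alpha_T}$ for every operator $R:D\to D$ such that for all ordinals $\alpha$: (a) $T(R^\alpha)\subseteq R(R^\alpha)\subseteq R^\alpha$, and (b) if $T(R^\alpha)\subsetneq R^\alpha$ then $R(R^\alpha)\subsetneq R^\alpha$. Definition II (for arbitrary $T$): an operator $R:D\to D$ is a relaxation of $T$ if for all ordinals $\alpha$: (1) $T(R^\alpha)\subseteq R(R^\alpha)$; (2) if $T(R^\alpha)\subseteq R^\alpha$ then $R(R^\alpha)\subseteq R^\alpha$; (3) if $R^\alpha$ is a fixpoint of $R$ then $R^\alpha$ is a fixpoint of $T$. $T$ is order independent if the set $\{G\mid G$ is the outcome of some relaxation of $T\}$ has at most one element. *)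

theory Defs
  imports Main
begin

text \<open>Ordinals are represented by the elements of a well-ordered type 'o
(assumed large enough in the main theorem).  The transfinite iteration
T^0 = top, T^(a+1) = T(T^a), T^b = Inf of T^a for a < b at limits.
Note that T^0 is Inf of the empty family, i.e. top.\<close>

definition ord_iter_step ::
  "('a::complete_lattice \<Rightarrow> 'a) \<Rightarrow> (('o::wellorder) \<Rightarrow> 'a) \<Rightarrow> 'o \<Rightarrow> 'a" where
  "ord_iter_step T f a =
     (if \<exists>b. b < a \<and> (\<forall>c. c < a \<longrightarrow> c \<le> b)
      then T (f (GREATEST b. b < a))
      else Inf (f ` {b. b < a}))"

definition iter :: "('a::complete_lattice \<Rightarrow> 'a) \<Rightarrow> 'o::wellorder \<Rightarrow> 'a" where
  "iter T = wfrec {(x, y). x < y} (ord_iter_step T)"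

definition contracting :: "('a::complete_lattice \<Rightarrow> 'a) \<Rightarrow> bool" where
  "contracting T \<longleftrightarrow> (\<forall>G. T G \<le> G)"

definition closure_ordinal :: "'o::wellorder itself \<Rightarrow> ('a::complete_lattice \<Rightarrow> 'a) \<Rightarrow> 'o \<Rightarrow> bool" where
  "closure_ordinal _ T a \<longleftrightarrow>
     T (iter T a) = iter T a \<and> (\<forall>b. b < a \<longrightarrow> T (iter T b) \<noteq> (iter T b :: 'a))"

definition is_outcome :: "'o::wellorder itself \<Rightarrow> ('a::complete_lattice \<Rightarrow> 'a) \<Rightarrow> 'a \<Rightarrow> bool" where
  "is_outcome ot T G \<longleftrightarrow> (\<exists>a::'o. closure_ordinal ot T a \<and> G = iter T a)"

definition outcome :: "'o::wellorder itself \<Rightarrow> ('a::complete_lattice \<Rightarrow> 'a) \<Rightarrow> 'a" where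
  "outcome ot T = iter T (LEAST a::'o. T (iter T a) = iter T a)"

definition order_independent_I :: "'o::wellorder itself \<Rightarrow> ('a::complete_lattice \<Rightarrow> 'a) \<Rightarrow> bool" where
  "order_independent_I ot T \<longleftrightarrow>
     (\<forall>R. (\<forall>a::'o.
            T (iter R a) \<le> R (iter R a) \<and> R (iter R a) \<le> iter R a \<and>
            (T (iter R a) < iter R a \<longrightarrow> R (iter R a) < iter R a))
          \<longrightarrow> outcome ot R = outcome ot T)"

definition relaxation :: "'o::wellorder itself \<Rightarrow> ('a::complete_lattice \<Rightarrow> 'a) \<Rightarrow> ('a \<Rightarrow> 'a) \<Rightarrow> bool" where
  "relaxation _ T R \<longleftrightarrow>
     (\<forall>a::'o.
        T (iter R a) \<le> R (iter R a) \<and>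
        (T (iter R a) \<le> iter R a \<longrightarrow> R (iter R a) \<le> iter R a) \<and>
        (R (iter R a) = iter R a \<longrightarrow> T (iter R a) = iter R a))"

definition order_independent_II :: "'o::wellorder itself \<Rightarrow> ('a::complete_lattice \<Rightarrow> 'a) \<Rightarrow> bool" where
  "order_independent_II ot T \<longleftrightarrow>
     (\<forall>G H. G \<in> {X. \<exists>R. relaxation ot T R \<and> is_outcome ot R X} \<longrightarrow>
            H \<in> {X. \<exists>R. relaxation ot T R \<and> is_outcome ot R X} \<longrightarrow> G = H)"

end

theory Submission
  imports Defs
begin

lemma iter_unfold:
  fixes T :: "'a::complete_lattice \<Rightarrow> 'a"
  shows "iter T a = ord_iter_step T (iter T) (a::'o::wellorder)"
proof -
  have wf: "wf {(x, y). x < (y::'o)}" using wf by (simp add: wf_def)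
  have adm: "adm_wf {(x, y). x < (y::'o)} (ord_iter_step T)"
    unfolding adm_wf_def
  proof (intro allI impI)
    fix f g :: "'o \<Rightarrow> 'a" and x :: 'o
    assume h: "\<forall>z. (z, x) \<in> {(x, y). x < y} \<longrightarrow> f z = g z"
    show "ord_iter_step T f x = ord_iter_step T g x"
    proof (cases "\<exists>b. b < x \<and> (\<forall>c. c < x \<longrightarrow> c \<le> b)")
      case True
      then obtain b where b: "b < x" "\<forall>c. c < x \<longrightarrow> c \<le> b" by blast
      have "(GREATEST b. b < x) = b" by (rule Greatest_equality) (use b in auto)
      then show ?thesis using True h b by (simp add: ord_iter_step_def)
    next
      case False
      have "f ` {b. b < x} = g ` {b. b < x}" using h by auto
      then show ?thesis by (simp only: ord_iter_step_def if_not_P[OF False])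
    qed
  qed
  show ?thesis unfolding iter_def by (subst wfrec_fixpoint[OF wf adm]) simp
qed

lemma iter_succ:
  assumes "b < a" "\<forall>c. c < a \<longrightarrow> c \<le> b"
  shows "iter T (a::'o::wellorder) = T (iter T b)"
proof -
  have "(GREATEST b. b < a) = b" by (rule Greatest_equality) (use assms in auto)
  then show ?thesis using assms by (subst iter_unfold) (auto simp: ord_iter_step_def)
qed

lemma iter_lim:
  assumes "\<not> (\<exists>b. b < a \<and> (\<forall>c. c < a \<longrightarrow> c \<le> b))"
  shows "iter T (a::'o::wellorder) = Inf (iter T ` {b. b < a})"
  by (subst iter_unfold) (simp only: ord_iter_step_def if_not_P[OF assms])

lemma iter_antitone:
  assumes dec: "\<forall>a::'o::wellorder. R (iter R a) \<le> iter R a"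
  shows "b \<le> a \<Longrightarrow> iter R a \<le> iter R (b::'o)"
proof (induction a arbitrary: b rule: less_induct)
  case (less a)
  show ?case
  proof (cases "b = a")
    case True then show ?thesis by simp
  next
    case False
    with less.prems have ba: "b < a" by simp
    show ?thesis
    proof (cases "\<exists>p. p < a \<and> (\<forall>c. c < a \<longrightarrow> c \<le> p)")
      case True
      then obtain p where p: "p < a" "\<forall>c. c < a \<longrightarrow> c \<le> p" by blast
      have "iter R a = R (iter R p)" by (rule iter_succ[OF p])
      also have "\<dots> \<le> iter R p" using dec by blast
      also have "\<dots> \<le> iter R b" using less.IH[OF p(1)] p(2) ba by blast
      finally show ?thesis .
    next
      case False
      then have "iter R a = Inf (iter R ` {b. b < a})" by (rule iter_lim)
      also have "\<dots> \<le> iter R b" using ba by (auto intro: Inf_lower)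
      finally show ?thesis .
    qed
  qed
qed

lemma fix_exists:
  fixes R :: "'a::complete_lattice \<Rightarrow> 'a"
  assumes card: "(card_of (UNIV :: 'a set), card_of (UNIV :: 'o::wellorder set)) \<in> ordLess"
    and dec: "\<forall>a::'o. R (iter R a) \<le> iter R a"
  shows "\<exists>a::'o. R (iter R a) = iter R a"
proof (rule ccontr)
  assume none: "\<not> (\<exists>a::'o. R (iter R a) = iter R a)"
  have strict: "iter R a < iter R b" if ba: "b < a" for a b :: 'o
  proof -
    define s where "s = (LEAST c. b < c)"
    have bs: "b < s" unfolding s_def by (rule LeastI[of _ a]) (rule ba)
    have sa: "s \<le> a" unfolding s_def by (rule Least_le) (rule ba)
    have pred: "\<forall>c. c < s \<longrightarrow> c \<le> b"
    proof (intro allI impI)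
      fix c assume "c < s"
      then have "\<not> b < c" unfolding s_def using not_less_Least by blast
      then show "c \<le> b" by simp
    qed
    have "iter R a \<le> iter R s" by (rule iter_antitone[OF dec sa])
    also have "\<dots> = R (iter R b)" by (rule iter_succ[OF bs pred])
    also have "\<dots> < iter R b"
    proof -
      have "R (iter R b) \<le> iter R b" using dec by blast
      moreover have "R (iter R b) \<noteq> iter R b" using none by blast
      ultimately show ?thesis by (simp add: less_le)
    qed
    finally show ?thesis .
  qed
  have "inj (iter R :: 'o \<Rightarrow> 'a)"
  proof (rule injI)
    fix x y :: 'o assume "iter R x = iter R y"
    then show "x = y" using strict[of x y] strict[of y x]
      by (cases x y rule: linorder_cases) auto
  qed
  then have "(card_of (UNIV :: 'o set), card_of (UNIV :: 'a set)) \<in> ordLeq"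
    using card_of_ordLeq[of "UNIV :: 'o set" "UNIV :: 'a set"] by blast
  then show False using not_ordLess_ordLeq[OF card] by blast
qed

lemma outcome_of_fix:
  fixes R :: "'a::complete_lattice \<Rightarrow> 'a" and ot :: "'o::wellorder itself"
  assumes "\<exists>a::'o. R (iter R a) = iter R a"
  shows "is_outcome ot R (outcome ot R)"
proof -
  define m where "m = (LEAST a::'o. R (iter R a) = iter R a)"
  have "R (iter R m) = iter R m" unfolding m_def by (rule LeastI_ex[OF assms])
  moreover have "\<forall>b. b < m \<longrightarrow> R (iter R b) \<noteq> iter R b"
    unfolding m_def using not_less_Least by blast
  ultimately have "closure_ordinal ot R m" by (simp add: closure_ordinal_def)
  then show ?thesis unfolding is_outcome_def outcome_def m_def[symmetric] by blast
qed

lemma is_outcome_eq: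
  fixes R :: "'a::complete_lattice \<Rightarrow> 'a" and ot :: "'o::wellorder itself"
  assumes "is_outcome ot R X"
  shows "X = outcome ot R"
proof -
  obtain a :: 'o where a: "closure_ordinal ot R a" "X = iter R a"
    using assms unfolding is_outcome_def by blast
  have "(LEAST a::'o. R (iter R a) = iter R a) = a"
  proof (rule Least_equality)
    show "R (iter R a) = iter R a" using a(1) by (simp add: closure_ordinal_def)
  next
    fix y :: 'o assume y: "R (iter R y) = iter R y"
    show "a \<le> y"
    proof (rule ccontr)
      assume "\<not> a \<le> y"
      then have "y < a" by simp
      then show False using y a(1) unfolding closure_ordinal_def by blast
    qed
  qed
  then show ?thesis using a(2) by (simp add: outcome_def)
qed

theorem mainTheorem3:
  fixes T :: "'a::complete_lattice \<Rightarrow> 'a" and ot :: "'o::wellorder itself"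
  assumes "(card_of (UNIV :: 'a set), card_of (UNIV :: 'o set)) \<in> ordLess"
    and "contracting T"
  shows "order_independent_I ot T \<longleftrightarrow> order_independent_II ot T"
proof
  assume I: "order_independent_I ot T"
  have key: "X = outcome ot T" if "relaxation ot T R" "is_outcome ot R X" for R X
  proof -
    have "\<forall>a::'o. T (iter R a) \<le> R (iter R a) \<and> R (iter R a) \<le> iter R a \<and>
            (T (iter R a) < iter R a \<longrightarrow> R (iter R a) < iter R a)"
    proof
      fix a :: 'o
      have r: "T (iter R a) \<le> R (iter R a)"
        "T (iter R a) \<le> iter R a \<longrightarrow> R (iter R a) \<le> iter R a"
        "R (iter R a) = iter R a \<longrightarrow> T (iter R a) = iter R a"
        using that(1) unfolding relaxation_def by blast+
      have c: "T (iter R a) \<le> iter R a" using assms(2) by (simp add: contracting_def)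
      show "T (iter R a) \<le> R (iter R a) \<and> R (iter R a) \<le> iter R a \<and>
            (T (iter R a) < iter R a \<longrightarrow> R (iter R a) < iter R a)"
        using r c unfolding less_le by blast
    qed
    then have "outcome ot R = outcome ot T" using I unfolding order_independent_I_def by blast
    then show ?thesis using is_outcome_eq[OF that(2)] by simp
  qed
  show "order_independent_II ot T" unfolding order_independent_II_def
    using key by blast
next
  assume II: "order_independent_II ot T"
  have Trel: "relaxation ot T T" using assms(2) by (simp add: relaxation_def contracting_def)
  have Tfix: "\<exists>a::'o. T (iter T a) = iter T a"
    by (rule fix_exists[OF assms(1)]) (use assms(2) in \<open>simp add: contracting_def\<close>)
  show "order_independent_I ot T" unfolding order_independent_I_def
  proof (intro allI impI)
    fix R :: "'a \<Rightarrow> 'a"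
    assume h: "\<forall>a::'o. T (iter R a) \<le> R (iter R a) \<and> R (iter R a) \<le> iter R a \<and>
            (T (iter R a) < iter R a \<longrightarrow> R (iter R a) < iter R a)"
    have Rrel: "relaxation ot T R" unfolding relaxation_def
    proof
      fix a :: 'o
      have "T (iter R a) \<le> R (iter R a)" "R (iter R a) \<le> iter R a"
        "T (iter R a) < iter R a \<longrightarrow> R (iter R a) < iter R a" using h by blast+
      then show "T (iter R a) \<le> R (iter R a) \<and>
        (T (iter R a) \<le> iter R a \<longrightarrow> R (iter R a) \<le> iter R a) \<and>
        (R (iter R a) = iter R a \<longrightarrow> T (iter R a) = iter R a)"
        unfolding less_le by (metis order_trans)
    qed
    have Rfix: "\<exists>a::'o. R (iter R a) = iter R a"
      by (rule fix_exists[OF assms(1)]) (use h in blast)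
    have "is_outcome ot R (outcome ot R)" by (rule outcome_of_fix[OF Rfix])
    moreover have "is_outcome ot T (outcome ot T)" by (rule outcome_of_fix[OF Tfix])
    ultimately show "outcome ot R = outcome ot T"
      using II Rrel Trel unfolding order_independent_II_def by blast
  qed
qed

end
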